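(* Let $(M,d)$ be a metric space, $A\subseteq M$ finite and $\beta>0$. For all $r,k>0$: (i) $\mathrm{Cr}^\beta_{r,k}(A)\subseteq\mathrm{Cov}_{(1+\beta^{-1})r,k}(A)$, and (ii) $\mathrm{Cov}_{r,k}(A)\subseteq\mathrm{Cr}^\beta_{\max\{1,2\beta\}r,k}(A)$.
   Context: $\bar B_d(x,r)=\{y\in M:d(x,y)\le r\}$. For finite $A\subseteq M$, $k>0$, $x\in M$, the $k$-core distance $\mathrm{core}^A_k(x)\in[0,\infty]$ is the distance from $x$ to its $\lceil k\rceil$-th nearest neighbor in $A$ (each point of $A$ counted once, $x$ itself counting if $x\in A$); equivalently $\mathrm{core}^A_k(x)=\min\{r\ge0:|\bar B_d(x,r)\cap A|\ge k\}$, and it is $\infty$ if $k>|A|$. The multicover bifiltration is $\mathrm{Cov}_{r,k}(A)=\{x\in M:|\bar B_d(x,r)\cap A|\ge k\}$. For $\beta>0$, $\Lambda^\beta_k(a,x)=\max\{\beta\,\mathrm{core}^A_k(a),d(a,x)\}$ ($a\in A$, $x\in M$), $B^\beta_{r,k}(a)=\{x\in M:\Lambda^\beta_k(a,x)\le r\}$, and the core bifiltration is $\mathrm{Cr}^\beta_{r,k}(A)=\bigcup_{a\in A}B^\beta_{r,k}(a)$. *)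

theory Defs
  imports "HOL-Analysis.Analysis" "HOL-Library.Extended_Real"
begin

text \<open>Closed ball: cball x r = {y. dist x y \<le> r} (library).
  k-core distance, valued in [0,\<infinity>] (infinite if fewer than k points of A):
  core A k x = min {r \<ge> 0 : |cball x r \<inter> A| \<ge> k}.\<close>

definition core_dist :: "'a::metric_space set \<Rightarrow> real \<Rightarrow> 'a \<Rightarrow> ereal" where
  "core_dist A k x = Inf {ereal r | r. r \<ge> 0 \<and> real (card (cball x r \<inter> A)) \<ge> k}"

definition multicover :: "'a::metric_space set \<Rightarrow> real \<Rightarrow> real \<Rightarrow> 'a set" where
  "multicover A r k = {x. real (card (cball x r \<inter> A)) \<ge> k}"

definition core_lambda :: "'a::metric_space set \<Rightarrow> real \<Rightarrow> real \<Rightarrow> 'a \<Rightarrow> 'a \<Rightarrow> ereal" where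
  "core_lambda A \<beta> k a x = max (ereal \<beta> * core_dist A k a) (ereal (dist a x))"

definition core_ball :: "'a::metric_space set \<Rightarrow> real \<Rightarrow> real \<Rightarrow> real \<Rightarrow> 'a \<Rightarrow> 'a set" where
  "core_ball A \<beta> r k a = {x. core_lambda A \<beta> k a x \<le> ereal r}"

definition core_bifiltration :: "'a::metric_space set \<Rightarrow> real \<Rightarrow> real \<Rightarrow> real \<Rightarrow> 'a set" where
  "core_bifiltration A \<beta> r k = (\<Union>a\<in>A. core_ball A \<beta> r k a)"

end

theory Submission
  imports Defs
begin

lemma card_mono_ball:
  assumes "finite A" "s \<le> t"
  shows "card (cball a s \<inter> A) \<le> card (cball a t \<inter> A)"
  using assms by (intro card_mono) auto

lemma gap:
  fixes a :: "'a::metric_space"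
  assumes "finite A"
  shows "\<exists>e>0. cball a (c+e) \<inter> A = cball a c \<inter> A"
proof -
  define D where "D = insert 1 ((\<lambda>y. dist a y - c) ` {y\<in>A. dist a y > c})"
  have fD: "finite D" using assms unfolding D_def by auto
  have pos: "\<forall>d\<in>D. d > 0" unfolding D_def by auto
  define e where "e = Min D / 2"
  have "Min D > 0" using fD pos by (simp add: D_def)
  hence e: "e > 0" unfolding e_def by simp
  have "cball a (c+e) \<inter> A \<subseteq> cball a c \<inter> A"
  proof
    fix y assume y: "y \<in> cball a (c+e) \<inter> A"
    show "y \<in> cball a c \<inter> A"
    proof (rule ccontr)
      assume "y \<notin> cball a c \<inter> A"
      hence "dist a y > c" using y by auto
      hence "dist a y - c \<in> D" using y unfolding D_def by auto
      hence "Min D \<le> dist a y - c" using fD by simp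
      thus False using y e unfolding e_def by auto
    qed
  qed
  moreover have "cball a c \<inter> A \<subseteq> cball a (c+e) \<inter> A" using e by auto
  ultimately show ?thesis using e by blast
qed

lemma core_le:
  assumes "s \<ge> 0" "real (card (cball a s \<inter> A)) \<ge> k"
  shows "core_dist A k a \<le> ereal s"
  unfolding core_dist_def by (rule Inf_lower) (use assms in auto)

lemma core_nonneg: "core_dist A k a \<ge> 0"
  unfolding core_dist_def by (rule Inf_greatest) auto

lemma core_attained:
  assumes "finite A" "core_dist A k a = ereal c"
  shows "real (card (cball a c \<inter> A)) \<ge> k"
proof -
  obtain e where e: "e > 0" "cball a (c+e) \<inter> A = cball a c \<inter> A"
    using gap[OF assms(1)] by blast
  have "core_dist A k a < ereal (c+e)" using assms(2) e by simp
  then obtain z where "z \<in> {ereal r | r. r \<ge> 0 \<and> real (card (cball a r \<inter> A)) \<ge> k}"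
    "z < ereal (c+e)"
    unfolding core_dist_def by (auto simp: Inf_less_iff)
  then obtain r where r: "r \<ge> 0" "real (card (cball a r \<inter> A)) \<ge> k" "r < c + e" by auto
  have "card (cball a r \<inter> A) \<le> card (cball a (c+e) \<inter> A)"
    using card_mono_ball[OF assms(1)] r by simp
  thus ?thesis using r e by simp
qed

theorem mainTheorem3:
  fixes A :: "'a::metric_space set" and \<beta> r k :: real
  assumes "finite A" and "\<beta> > 0" and "r > 0" and "k > 0"
  shows "core_bifiltration A \<beta> r k \<subseteq> multicover A ((1 + 1 / \<beta>) * r) k
         \<and> multicover A r k \<subseteq> core_bifiltration A \<beta> (max 1 (2 * \<beta>) * r) k"
proof
  show "core_bifiltration A \<beta> r k \<subseteq> multicover A ((1 + 1 / \<beta>) * r) k"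
  proof
    fix x assume "x \<in> core_bifiltration A \<beta> r k"
    then obtain a where a: "a \<in> A" and l: "core_lambda A \<beta> k a x \<le> ereal r"
      unfolding core_bifiltration_def core_ball_def by auto
    have h1: "ereal \<beta> * core_dist A k a \<le> ereal r" and h2: "dist a x \<le> r"
      using l unfolding core_lambda_def by auto
    obtain c where c: "core_dist A k a = ereal c"
    proof (cases "core_dist A k a")
      case (real c) thus ?thesis using that by simp
    next
      case PInf thus ?thesis using h1 assms(2) by simp
    next
      case MInf thus ?thesis using core_nonneg[of A k a] by simp
    qed
    have "\<beta> * c \<le> r" using h1 c by simp
    hence cb: "c \<le> r / \<beta>" using assms(2) by (simp add: field_simps)
    have "cball a c \<subseteq> cball x ((1 + 1 / \<beta>) * r)"
    proof
      fix y assume "y \<in> cball a c"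
      hence "dist a y \<le> c" by simp
      moreover have "dist x y \<le> dist a x + dist a y" by (metis dist_commute dist_triangle)
      ultimately have "dist x y \<le> r + r / \<beta>" using h2 cb by linarith
      thus "y \<in> cball x ((1 + 1 / \<beta>) * r)" by (simp add: field_simps)
    qed
    hence "card (cball a c \<inter> A) \<le> card (cball x ((1 + 1 / \<beta>) * r) \<inter> A)"
      using assms(1) by (intro card_mono) auto
    thus "x \<in> multicover A ((1 + 1 / \<beta>) * r) k"
      using core_attained[OF assms(1) c] unfolding multicover_def by simp
  qed
next
  show "multicover A r k \<subseteq> core_bifiltration A \<beta> (max 1 (2 * \<beta>) * r) k"
  proof
    fix x assume "x \<in> multicover A r k"
    hence cx: "real (card (cball x r \<inter> A)) \<ge> k" unfolding multicover_def by simp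
    hence "cball x r \<inter> A \<noteq> {}" using assms(4) by auto
    then obtain a where a: "a \<in> A" "dist x a \<le> r" by auto
    have "cball x r \<subseteq> cball a (2*r)"
    proof
      fix y assume "y \<in> cball x r"
      hence "dist x y \<le> r" by simp
      moreover have "dist a y \<le> dist x a + dist x y" by (metis dist_commute dist_triangle)
      ultimately show "y \<in> cball a (2*r)" using a by simp
    qed
    hence "card (cball x r \<inter> A) \<le> card (cball a (2*r) \<inter> A)"
      using assms(1) by (intro card_mono) auto
    hence "core_dist A k a \<le> ereal (2*r)" using cx assms(3) by (intro core_le) auto
    hence "ereal \<beta> * core_dist A k a \<le> ereal \<beta> * ereal (2*r)"
      using assms(2) by (intro ereal_mult_left_mono) auto
    also have "\<dots> \<le> ereal (max 1 (2 * \<beta>) * r)"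
      using assms(3) by (simp add: mult_right_mono)
    finally have 1: "ereal \<beta> * core_dist A k a \<le> ereal (max 1 (2 * \<beta>) * r)" .
    have "1 * r \<le> max 1 (2 * \<beta>) * r"
      using assms(3) by (intro mult_right_mono) auto
    hence "dist a x \<le> max 1 (2 * \<beta>) * r" using a by (simp add: dist_commute)
    hence 2: "ereal (dist a x) \<le> ereal (max 1 (2 * \<beta>) * r)" by simp
    have "core_lambda A \<beta> k a x \<le> ereal (max 1 (2 * \<beta>) * r)"
      unfolding core_lambda_def using 1 2 by (rule max.boundedI)
    thus "x \<in> core_bifiltration A \<beta> (max 1 (2 * \<beta>) * r) k"
      using a unfolding core_bifiltration_def core_ball_def by blast
  qed
qed

end
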